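(* Let $C=\{a,b,c\}$ and let $W_4\subseteq C^\omega$ be the set of infinite words which either contain infinitely many occurrences of the factor $bb$, or contain only finitely many occurrences of $b$ and only finitely many occurrences of the factor $aa$. Then the minimal number of states of a deterministic parity automaton recognising $W_4$ is $3$.
   Context: A deterministic parity automaton over $C$ consists of a finite set of states $Q$, an initial state $q_0$, a transition function $Q\times C\to Q$ and a priority function assigning a natural number to each transition. The run on $w\in C^\omega$ is the unique sequence of transitions from $q_0$ reading $w$; $w$ is accepted if the maximal priority occurring infinitely often along the run is even. The automaton recognises the set of accepted words. *)

theory Defs
  imports Main
begin

datatype letter = La | Lb | Lc

type_synonym word = "nat \<Rightarrow> letter"

definition is_dpa :: "nat set \<Rightarrow> nat \<Rightarrow> (nat \<Rightarrow> letter \<Rightarrow> nat) \<Rightarrow> (nat \<Rightarrow> letter \<Rightarrow> nat) \<Rightarrow> bool" where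
  "is_dpa Q q0 delta pri \<longleftrightarrow> finite Q \<and> q0 \<in> Q \<and> (\<forall>q\<in>Q. \<forall>x. delta q x \<in> Q)"

fun run :: "nat \<Rightarrow> (nat \<Rightarrow> letter \<Rightarrow> nat) \<Rightarrow> word \<Rightarrow> nat \<Rightarrow> nat" where
  "run q0 delta w 0 = q0"
| "run q0 delta w (Suc i) = delta (run q0 delta w i) (w i)"

definition run_pri :: "nat \<Rightarrow> (nat \<Rightarrow> letter \<Rightarrow> nat) \<Rightarrow> (nat \<Rightarrow> letter \<Rightarrow> nat) \<Rightarrow> word \<Rightarrow> nat \<Rightarrow> nat" where
  "run_pri q0 delta pri w i = pri (run q0 delta w i) (w i)"

definition accepts :: "nat \<Rightarrow> (nat \<Rightarrow> letter \<Rightarrow> nat) \<Rightarrow> (nat \<Rightarrow> letter \<Rightarrow> nat) \<Rightarrow> word \<Rightarrow> bool" where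
  "accepts q0 delta pri w \<longleftrightarrow>
     even (Max {p. infinite {i. run_pri q0 delta pri w i = p}})"

definition lang :: "nat \<Rightarrow> (nat \<Rightarrow> letter \<Rightarrow> nat) \<Rightarrow> (nat \<Rightarrow> letter \<Rightarrow> nat) \<Rightarrow> word set" where
  "lang q0 delta pri = {w. accepts q0 delta pri w}"

definition W4 :: "word set" where
  "W4 = {w. infinite {i. w i = Lb \<and> w (Suc i) = Lb}
           \<or> (finite {i. w i = Lb} \<and> finite {i. w i = La \<and> w (Suc i) = La})}"

end

theory Submission
  imports Defs
begin

definition go :: "(nat \<Rightarrow> letter \<Rightarrow> nat) \<Rightarrow> nat \<Rightarrow> letter list \<Rightarrow> nat" where
  "go d q u = foldl d q u"

definition omega :: "letter list \<Rightarrow> letter list \<Rightarrow> word" where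
  "omega x y i = (if i < length x then x!i else y ! ((i - length x) mod length y))"

lemma go_append: "go d q (u @ v) = go d (go d q u) v"
  by (simp add: go_def)

lemma run_omega_prefix: "i \<le> length x \<Longrightarrow> run q0 d (omega x y) i = go d q0 (take i x)"
proof (induction i)
  case 0 then show ?case by (simp add: go_def)
next
  case (Suc i)
  then have "i < length x" by simp
  then show ?case using Suc by (simp add: omega_def go_def take_Suc_conv_app_nth)
qed

lemma omega_tail: "y \<noteq> [] \<Longrightarrow> omega x y (length x + m) = y ! (m mod length y)"
  by (simp add: omega_def)

lemma run_omega_per:
  assumes "y \<noteq> []" "go d s y = s" "s = go d q0 x"
  shows "run q0 d (omega x y) (length x + m) = go d s (take (m mod length y) y)"
proof (induction m)
  case 0 then show ?case using run_omega_prefix[of "length x" x q0 d y] assms by (simp add: go_def)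
next
  case (Suc m)
  let ?n = "length y"
  have lt: "m mod ?n < ?n" using assms(1) by simp
  have "run q0 d (omega x y) (length x + Suc m) = d (go d s (take (m mod ?n) y)) (y ! (m mod ?n))"
    using Suc omega_tail[OF assms(1)] by simp
  also have "\<dots> = go d s (take (Suc (m mod ?n)) y)"
    using lt by (simp add: go_def take_Suc_conv_app_nth)
  also have "\<dots> = go d s (take (Suc m mod ?n) y)"
  proof (cases "Suc (m mod ?n) = ?n")
    case True
    then show ?thesis using assms(2) by (simp add: mod_Suc go_def)
  next
    case False
    then show ?thesis by (simp add: mod_Suc)
  qed
  finally show ?case .
qed

lemma inf_unb: "infinite (S::nat set) \<longleftrightarrow> (\<forall>m. \<exists>i\<ge>m. i \<in> S)"
proof
  assume "infinite S"
  then show "\<forall>m. \<exists>i\<ge>m. i \<in> S" unfolding finite_nat_set_iff_bounded_le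
    by (metis nat_le_linear)
next
  assume H: "\<forall>m. \<exists>i\<ge>m. i \<in> S"
  show "infinite S"
  proof
    assume "finite S"
    then obtain m where "\<forall>n\<in>S. n \<le> m" unfolding finite_nat_set_iff_bounded_le by blast
    moreover obtain i where "i \<ge> Suc m" "i \<in> S" using H by blast
    ultimately show False by force
  qed
qed

lemma inf_per:
  fixes P :: "nat \<Rightarrow> bool"
  assumes "n > 0" "\<forall>m. P (N + m) = P (N + m mod n)"
  shows "infinite {i. P i} \<longleftrightarrow> (\<exists>j<n. P (N + j))"
proof
  assume "infinite {i. P i}"
  then obtain i where "i \<ge> N" "P i" using inf_unb[of "{i. P i}"] by auto
  then have "P (N + (i - N) mod n)" using assms(2)[rule_format, of "i - N"] by simp
  then show "\<exists>j<n. P (N + j)" using assms(1) by (meson mod_less_divisor)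
next
  assume "\<exists>j<n. P (N + j)"
  then obtain j where j: "j < n" "P (N + j)" by blast
  have "\<forall>m. \<exists>i\<ge>m. P i"
  proof
    fix m
    have "(j + m * n) mod n = j" using j by simp
    then have "P (N + (j + m * n))" using assms(2)[rule_format, of "j + m*n"] j by simp
    moreover have "N + (j + m * n) \<ge> m" using assms(1) by (simp add: trans_le_add2)
    ultimately show "\<exists>i\<ge>m. P i" by blast
  qed
  then show "infinite {i. P i}" using inf_unb[of "{i. P i}"] by auto
qed

definition TT :: "(nat \<Rightarrow> letter \<Rightarrow> nat) \<Rightarrow> nat \<Rightarrow> letter list \<Rightarrow> (nat \<times> letter) set" where
  "TT d s y = (\<lambda>j. (go d s (take j y), y!j)) ` {..<length y}"

lemma set_pri:
  assumes "y \<noteq> []" "go d s y = s" "s = go d q0 x"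
  shows "{p. infinite {i. run_pri q0 d pri (omega x y) i = p}} = (\<lambda>(q,a). pri q a) ` TT d s y"
proof -
  let ?n = "length y"
  have rp: "run_pri q0 d pri (omega x y) (length x + m) = pri (go d s (take (m mod ?n) y)) (y ! (m mod ?n))" for m
    using run_omega_per[OF assms] omega_tail[OF assms(1)] by (simp add: run_pri_def)
  have "infinite {i. run_pri q0 d pri (omega x y) i = p} \<longleftrightarrow>
        (\<exists>j<?n. run_pri q0 d pri (omega x y) (length x + j) = p)" for p
    by (rule inf_per) (use assms(1) rp in auto)
  also have "\<dots> p \<longleftrightarrow> (\<exists>j<?n. pri (go d s (take j y)) (y ! j) = p)" for p
    using rp by auto
  finally show ?thesis unfolding TT_def by auto
qed

lemma TT_append: "TT d s (u @ v) = TT d s u \<union> TT d (go d s u) v"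
proof -
  have "TT d s (u @ v) = (\<lambda>j. (go d s (take j (u@v)), (u@v)!j)) ` ({..<length u} \<union> (\<lambda>k. length u + k) ` {..<length v})"
    unfolding TT_def
  proof (rule arg_cong[where f = "image _"])
    show "{..<length (u @ v)} = {..<length u} \<union> (\<lambda>k. length u + k) ` {..<length v}"
    proof (rule set_eqI)
      fix i
      show "i \<in> {..<length (u @ v)} \<longleftrightarrow> i \<in> {..<length u} \<union> (\<lambda>k. length u + k) ` {..<length v}"
        by (cases "i < length u") (auto simp: image_iff intro!: bexI[of _ "i - length u"])
    qed
  qed
  also have "\<dots> = TT d s u \<union> TT d (go d s u) v"
  proof -
    have A: "(\<lambda>j. (go d s (take j (u@v)), (u@v)!j)) ` {..<length u} = TT d s u"
      unfolding TT_def by (rule image_cong) (auto simp: nth_append)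
    have B: "(\<lambda>j. (go d s (take j (u@v)), (u@v)!j)) ` ((\<lambda>k. length u + k) ` {..<length v}) = TT d (go d s u) v"
      unfolding TT_def image_image by (rule image_cong) (auto simp: go_append)
    show ?thesis unfolding image_Un A B ..
  qed
  finally show ?thesis .
qed

lemma accept_eq:
  assumes "go d q0 x = s" "go d s u = s" "go d s v = s" "u \<noteq> []" "v \<noteq> []"
  shows "accepts q0 d pri (omega x (u @ v)) = accepts q0 d pri (omega x (u @ u @ v @ v))"
proof -
  have g1: "go d s (u @ v) = s" using assms by (simp add: go_append)
  have g2: "go d s (u @ u @ v @ v) = s" using assms by (simp add: go_append)
  have "TT d s (u @ v) = TT d s (u @ u @ v @ v)"
    using assms by (simp add: TT_append go_append Un_ac)
  then show ?thesis unfolding accepts_def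
    using set_pri[OF _ g1 assms(1)[symmetric], of pri] set_pri[OF _ g2 assms(1)[symmetric], of pri] assms(4)
    by simp
qed

definition W4l :: "letter list \<Rightarrow> bool" where
  "W4l y = ((\<exists>j<length y. y!j = Lb \<and> y!(Suc j mod length y) = Lb) \<or>
     (Lb \<notin> set y \<and> \<not>(\<exists>j<length y. y!j = La \<and> y!(Suc j mod length y) = La)))"

lemma inf_pair_omega:
  assumes "y \<noteq> []"
  shows "infinite {i. omega x y i = c \<and> omega x y (Suc i) = c} \<longleftrightarrow>
         (\<exists>j<length y. y!j = c \<and> y!(Suc j mod length y) = c)"
proof -
  let ?n = "length y"
  have w: "omega x y (length x + m) = y ! (m mod ?n)" for m using omega_tail[OF assms] .
  have w2: "omega x y (Suc (length x + m)) = y ! (Suc m mod ?n)" for m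
    using w[of "Suc m"] by simp
  have "infinite {i. omega x y i = c \<and> omega x y (Suc i) = c} \<longleftrightarrow>
        (\<exists>j<?n. omega x y (length x + j) = c \<and> omega x y (Suc (length x + j)) = c)"
    by (rule inf_per) (use assms in \<open>auto simp: w w2 mod_Suc_eq\<close>)
  also have "\<dots> \<longleftrightarrow> (\<exists>j<length y. y!j = c \<and> y!(Suc j mod length y) = c)"
    by (auto simp: w w2)
  finally show ?thesis .
qed

lemma inf_single_omega:
  assumes "y \<noteq> []"
  shows "infinite {i. omega x y i = c} \<longleftrightarrow> c \<in> set y"
proof -
  let ?n = "length y"
  have w: "omega x y (length x + m) = y ! (m mod ?n)" for m using omega_tail[OF assms] .
  have "infinite {i. omega x y i = c} \<longleftrightarrow> (\<exists>j<?n. omega x y (length x + j) = c)"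
    by (rule inf_per) (use assms in \<open>auto simp: w\<close>)
  also have "\<dots> \<longleftrightarrow> c \<in> set y"
    by (auto simp: w in_set_conv_nth)
  finally show ?thesis .
qed

lemma W4_omega: "y \<noteq> [] \<Longrightarrow> (omega x y \<in> W4) = W4l y"
  unfolding W4_def W4l_def using inf_pair_omega[of y x] inf_single_omega[of y x] by auto

lemma bad:
  assumes "lang q0 d pri = W4" "go d q0 x = s" "go d s u = s" "go d s v = s" "u \<noteq> []" "v \<noteq> []"
  shows "W4l (u @ v) = W4l (u @ u @ v @ v)"
proof -
  have L: "\<And>w. (w \<in> W4) = accepts q0 d pri w" using assms(1) unfolding lang_def by blast
  have "W4l (u @ v) = (omega x (u @ v) \<in> W4)" using W4_omega assms by simp
  also have "\<dots> = accepts q0 d pri (omega x (u @ v))" by (rule L)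
  also have "\<dots> = accepts q0 d pri (omega x (u @ u @ v @ v))" by (rule accept_eq[OF assms(2-)])
  also have "\<dots> = (omega x (u @ u @ v @ v) \<in> W4)" by (rule L[symmetric])
  also have "\<dots> = W4l (u @ u @ v @ v)" using W4_omega assms by simp
  finally show ?thesis .
qed

fun adj :: "letter \<Rightarrow> letter list \<Rightarrow> bool" where
  "adj c (x # y # r) = ((x = c \<and> y = c) \<or> adj c (y # r))"
| "adj c _ = False"

lemma adj_iff: "adj c zs \<longleftrightarrow> (\<exists>j. Suc j < length zs \<and> zs!j = c \<and> zs!Suc j = c)"
proof (induction c zs rule: adj.induct)
  case (1 c x y r)
  show ?case
  proof
    assume "adj c (x # y # r)"
    then show "\<exists>j. Suc j < length (x # y # r) \<and> (x # y # r)!j = c \<and> (x # y # r)!Suc j = c"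
      using 1 by (auto intro: exI[of _ 0])
  next
    assume "\<exists>j. Suc j < length (x # y # r) \<and> (x # y # r)!j = c \<and> (x # y # r)!Suc j = c"
    then obtain j where j: "Suc j < length (x # y # r)" "(x # y # r)!j = c" "(x # y # r)!Suc j = c" by blast
    show "adj c (x # y # r)"
    proof (cases j)
      case 0 then show ?thesis using j by simp
    next
      case (Suc k) then show ?thesis using j 1 by auto
    qed
  qed
qed auto

lemma cyc_adj:
  assumes "y \<noteq> []"
  shows "(\<exists>j<length y. y!j = c \<and> y!(Suc j mod length y) = c) \<longleftrightarrow> adj c (y @ [hd y])"
proof -
  have e: "(y @ [hd y]) ! Suc j = y ! (Suc j mod length y)" if "j < length y" for j
  proof (cases "Suc j < length y")
    case True then show ?thesis by (simp add: nth_append)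
  next
    case False
    then have "Suc j = length y" using that by simp
    then show ?thesis using assms by (simp add: nth_append hd_conv_nth)
  qed
  have e2: "(y @ [hd y]) ! j = y ! j" if "j < length y" for j using that by (simp add: nth_append)
  show ?thesis unfolding adj_iff using e e2 by auto
qed

lemma W4l_adj: "y \<noteq> [] \<Longrightarrow> W4l y = (adj Lb (y @ [hd y]) \<or> (Lb \<notin> set y \<and> \<not> adj La (y @ [hd y])))"
  unfolding W4l_def using cyc_adj[of y] by simp

lemma W4l_facts:
  "u\<in>set [[Lc,Lc],[La,Lc,La],[Lb,La,La,Lb]] \<Longrightarrow> v\<in>set [[Lc,Lc],[La,Lc,La],[Lb,La,La,Lb]] \<Longrightarrow>
     u \<noteq> v \<Longrightarrow> W4l (u @ v) \<noteq> W4l (u @ u @ v @ v)"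
  by (auto simp: W4l_adj) 

lemma contra_U:
  assumes "lang q0 d pri = W4"
    and "\<exists>x\<in>set [[],[La],[Lb],[Lc]]. \<exists>u\<in>set [[Lc,Lc],[La,Lc,La],[Lb,La,La,Lb]].
      \<exists>v\<in>set [[Lc,Lc],[La,Lc,La],[Lb,La,La,Lb]].
      u \<noteq> v \<and> go d (go d q0 x) u = go d q0 x \<and> go d (go d q0 x) v = go d q0 x"
  shows False
proof -
  obtain x u v where
    u: "u\<in>set [[Lc,Lc],[La,Lc,La],[Lb,La,La,Lb]]" and v: "v\<in>set [[Lc,Lc],[La,Lc,La],[Lb,La,La,Lb]]"
    and h: "u \<noteq> v" "go d (go d q0 x) u = go d q0 x" "go d (go d q0 x) v = go d q0 x"
    using assms(2) by blast
  have ne: "u \<noteq> []" "v \<noteq> []" using u v by auto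
  have "W4l (u @ v) = W4l (u @ u @ v @ v)" using bad[OF assms(1) refl h(2,3) ne] .
  then show False using W4l_facts[OF u v h(1)] by simp
qed

lemma no_small:
  assumes "is_dpa Q q0 d pri" "card Q = n" "lang q0 d pri = W4" "n < 3"
  shows False
proof -
  have fin: "finite Q" and q0: "q0 \<in> Q" and cl: "\<forall>q\<in>Q. \<forall>x. d q x \<in> Q"
    using assms(1) by (auto simp: is_dpa_def)
  have "n \<noteq> 0" using fin q0 assms(2) card_gt_0_iff by blast
  then consider "n = 1" | "n = 2" using assms(4) by linarith
  then show False
  proof cases
    case 1
    then have Q: "Q = {q0}" using assms(2) q0 by (metis card_1_singletonE singletonD)
    then have "\<forall>x. d q0 x = q0" using cl by auto
    then have "d q0 La = q0" "d q0 Lb = q0" "d q0 Lc = q0" by auto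
    then show False by (intro contra_U[OF assms(3)]) (simp add: go_def)
  next
    case 2
    then obtain a b where ab: "Q = {a, b}" "a \<noteq> b" using assms(2) by (meson card_2_iff)
    then obtain r where Q: "Q = {q0, r}" "r \<noteq> q0" using q0 by blast
    have D: "\<And>q x. q \<in> {q0, r} \<Longrightarrow> d q x = q0 \<or> d q x = r" using cl Q by blast
    have d1: "d q0 La = q0 \<or> d q0 La = r" and d2: "d q0 Lb = q0 \<or> d q0 Lb = r"
      and d3: "d q0 Lc = q0 \<or> d q0 Lc = r" and d4: "d r La = q0 \<or> d r La = r"
      and d5: "d r Lb = q0 \<or> d r Lb = r" and d6: "d r Lc = q0 \<or> d r Lc = r"
      using D by auto
    have rq: "q0 \<noteq> r" using Q(2) by simp
    show False
      using d1 d2 d3 d4 d5 d6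
      apply (elim disjE)
      apply (rule contra_U[OF assms(3)]; simp add: go_def rq Q(2))+
      done
  qed
qed


definition d3 :: "nat \<Rightarrow> letter \<Rightarrow> nat" where
  "d3 q x = (case x of La \<Rightarrow> 0 | Lb \<Rightarrow> 1 | Lc \<Rightarrow> 2)"

definition p3 :: "nat \<Rightarrow> letter \<Rightarrow> nat" where
  "p3 q x = (case x of La \<Rightarrow> (if q = 0 then 1 else 0) | Lb \<Rightarrow> (if q = 1 then 4 else 3) | Lc \<Rightarrow> 0)"

lemma exists_inf_val:
  assumes "\<forall>i. f i \<in> F" "finite F"
  shows "\<exists>p\<in>F. infinite {i::nat. f i = p}"
proof (rule ccontr)
  assume "\<not> ?thesis"
  then have "finite (\<Union>p\<in>F. {i. f i = p})" using assms(2) by auto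
  moreover have "(\<Union>p\<in>F. {i. f i = p}) = UNIV" using assms(1) by auto
  ultimately show False by simp
qed

lemma upper: "lang 2 d3 p3 = W4"
proof (rule set_eqI)
  fix w
  let ?rp = "run_pri 2 d3 p3 w"
  let ?S = "{p. infinite {i. ?rp i = p}}"
  let ?BB = "{i. w i = Lb \<and> w (Suc i) = Lb}"
  let ?AA = "{i. w i = La \<and> w (Suc i) = La}"
  let ?B = "{i. w i = Lb}"
  have rs: "run 2 d3 w (Suc i) = d3 0 (w i)" for i by (simp add: d3_def)
  have rp0: "?rp 0 = p3 2 (w 0)" by (simp add: run_pri_def)
  have rpS: "?rp (Suc i) = p3 (d3 0 (w i)) (w (Suc i))" for i by (simp add: run_pri_def d3_def)
  have rng: "?rp i \<in> {0,1,3,4}" for i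
    by (cases i) (auto simp: rp0 rpS p3_def d3_def split: letter.splits)
  have Sfin: "?S \<subseteq> {0,1,3,4}"
  proof
    fix p assume "p \<in> ?S"
    then have "{i. ?rp i = p} \<noteq> {}" by (metis (no_types) finite.emptyI mem_Collect_eq)
    then obtain i where "?rp i = p" by blast
    then show "p \<in> {0,1,3,4}" using rng[of i] by simp
  qed
  have Sne: "\<exists>p. p \<in> ?S" using exists_inf_val[of ?rp "{0,1,3,4}"] rng by auto
  have e4: "{i. ?rp i = 4} = Suc ` ?BB"
  proof (rule set_eqI)
    fix i show "i \<in> {i. ?rp i = 4} \<longleftrightarrow> i \<in> Suc ` ?BB"
      by (cases i) (auto simp: rp0 rpS p3_def d3_def split: letter.splits)
  qed
  have e1: "{i. ?rp i = 1} = Suc ` ?AA"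
  proof (rule set_eqI)
    fix i show "i \<in> {i. ?rp i = 1} \<longleftrightarrow> i \<in> Suc ` ?AA"
      by (cases i) (auto simp: rp0 rpS p3_def d3_def split: letter.splits)
  qed
  have eB: "?B = {i. ?rp i = 3} \<union> {i. ?rp i = 4}"
  proof (rule set_eqI)
    fix i show "i \<in> ?B \<longleftrightarrow> i \<in> {i. ?rp i = 3} \<union> {i. ?rp i = 4}"
      by (cases i) (auto simp: rp0 rpS p3_def d3_def split: letter.splits)
  qed
  have e3: "{i. ?rp i = 3} \<subseteq> ?B" using eB by blast
  have i4: "4 \<in> ?S \<longleftrightarrow> infinite ?BB" using e4 by (simp add: finite_image_iff)
  have i1: "1 \<in> ?S \<longleftrightarrow> infinite ?AA" using e1 by (simp add: finite_image_iff)
  have finS: "finite ?S" using Sfin finite_subset by blast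
  have acc: "accepts 2 d3 p3 w = even (Max ?S)" by (simp add: accepts_def)
  show "w \<in> lang 2 d3 p3 \<longleftrightarrow> w \<in> W4"
  proof (cases "infinite ?BB")
    case True
    then have "Max ?S = 4" using i4 Sfin finS by (intro Max_eqI) auto
    then show ?thesis using True by (simp add: lang_def acc W4_def)
  next
    case nBB: False
    show ?thesis
    proof (cases "infinite ?B")
      case True
      then have "3 \<in> ?S" using eB nBB i4 by auto
      moreover have "4 \<notin> ?S" using nBB i4 by auto
      ultimately have "Max ?S = 3" using Sfin finS by (intro Max_eqI) auto
      then show ?thesis using True nBB by (simp add: lang_def acc W4_def)
    next
      case nB: False
      have n3: "3 \<notin> ?S" using nB e3 finite_subset by auto
      have n4: "4 \<notin> ?S" using nBB i4 by auto
      show ?thesis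
      proof (cases "infinite ?AA")
        case True
        then have "Max ?S = 1" using i1 Sfin finS n3 n4 by (intro Max_eqI) auto
        then show ?thesis using True nB nBB by (simp add: lang_def acc W4_def)
      next
        case False
        then have "?S = {0}" using i1 Sfin n3 n4 Sne by auto
        then show ?thesis using False nB nBB by (simp add: lang_def acc W4_def)
      qed
    qed
  qed
qed

theorem propositionB2:
  shows "(LEAST n. \<exists>Q q0 delta pri. is_dpa Q q0 delta pri \<and> card Q = n
                      \<and> lang q0 delta pri = W4) = 3"
proof (rule Least_equality)
  show "\<exists>Q q0 delta pri. is_dpa Q q0 delta pri \<and> card Q = 3 \<and> lang q0 delta pri = W4"
  proof (intro exI conjI)
    show "is_dpa {0,1,2} 2 d3 p3" by (auto simp: is_dpa_def d3_def split: letter.splits)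
    show "card {0,1,2::nat} = 3" by simp
    show "lang 2 d3 p3 = W4" by (rule upper)
  qed
next
  fix n assume "\<exists>Q q0 delta pri. is_dpa Q q0 delta pri \<and> card Q = n \<and> lang q0 delta pri = W4"
  then obtain Q q0 delta pri where h: "is_dpa Q q0 delta pri" "card Q = n" "lang q0 delta pri = W4" by blast
  show "3 \<le> n"
  proof (rule ccontr)
    assume "\<not> 3 \<le> n"
    then have "n < 3" by simp
    then show False using no_small[OF h] by blast
  qed
qed

end
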